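(* Under the hypotheses of Theorem 7.3 (positive integers $a,d,r,h,n$, $r\geq 2$, $\gcd(a,d)=\gcd(a,r)=1$, $d>hn(r-1)$, $a_0=a$, $a_{k+1}=ha+r^kd$ for $0\leq k\leq n$, $\{a_0,\dots,a_{n+1}\}$ minimally generating $\mathfrak{S}_{n+2}$), every nonzero element $\omega(i)=\ell_iha+id$ ($1\leq i\leq a-1$) of $\mathrm{Ap}(\mathfrak{S}_{n+2},a)$ has a unique expression $\omega(i)=\sum_{k=0}^{n}c_{k+1}a_{k+1}$ with $c_{k+1}\in\mathbb{N}$; namely $(c_1,\dots,c_{n+1})$ is the digit vector of the $r$-adic representation of $i$ up to order $n$.
   Context: The $r$-adic representation of $i$ up to order $n$ is the unique expression $i=\sum_{k=0}^{n}\alpha_kr^k$ with nonnegative integers $\alpha_k$, $0\leq\alpha_k\leq r-1$ for $k\leq n-1$ and $\alpha_n$ unrestricted; $\ell_i=\sum_k\alpha_k$. *)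

theory Defs
  imports Main
begin

definition radic_digit :: "nat \<Rightarrow> nat \<Rightarrow> nat \<Rightarrow> nat \<Rightarrow> nat" where
  "radic_digit r n i k = (if k < n then (i div r ^ k) mod r else i div r ^ n)"

definition radic_len :: "nat \<Rightarrow> nat \<Rightarrow> nat \<Rightarrow> nat" where
  "radic_len r n i = (\<Sum>k\<le>n. radic_digit r n i k)"

definition gen :: "nat \<Rightarrow> nat \<Rightarrow> nat \<Rightarrow> nat \<Rightarrow> nat \<Rightarrow> nat" where
  "gen a h r d j = (if j = 0 then a else h * a + r ^ (j - 1) * d)"

definition span_idx :: "(nat \<Rightarrow> nat) \<Rightarrow> nat set \<Rightarrow> nat set" where
  "span_idx g I = {s. \<exists>c :: nat \<Rightarrow> nat. s = (\<Sum>j\<in>I. c j * g j)}"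

definition minimal_gens :: "(nat \<Rightarrow> nat) \<Rightarrow> nat set \<Rightarrow> bool" where
  "minimal_gens g I = (\<forall>j\<in>I. g j \<notin> span_idx g (I - {j}))"

end

theory Submission
  imports Defs
begin

lemma digit_Suc0: "radic_digit r (Suc n) J 0 = J mod r"
  by (simp add: radic_digit_def)

lemma digit_SucSuc: "radic_digit r (Suc n) J (Suc k) = radic_digit r n (J div r) k"
  by (simp add: radic_digit_def div_mult2_eq)

lemma len_Suc: "radic_len r (Suc n) J = J mod r + radic_len r n (J div r)"
  unfolding radic_len_def
  by (simp add: sum.atMost_Suc_shift digit_Suc0 digit_SucSuc del: sum.atMost_Suc)

lemma expand: "(\<Sum>k\<le>n. radic_digit r n J k * r^k) = J"
proof (induction n arbitrary: J)
  case 0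
  then show ?case by (simp add: radic_digit_def)
next
  case (Suc n)
  have "(\<Sum>k\<le>Suc n. radic_digit r (Suc n) J k * r^k)
      = J mod r + (\<Sum>k\<le>n. radic_digit r n (J div r) k * r^k) * r"
    by (simp add: sum.atMost_Suc_shift digit_Suc0 digit_SucSuc sum_distrib_right
        mult.assoc mult.commute del: sum.atMost_Suc) (simp add: sum_distrib_left)
  also have "\<dots> = J" using Suc.IH by simp
  finally show ?case .
qed

lemma minlem:
  assumes r: "r \<ge> 2"
  shows "(\<Sum>k\<le>n. c k) \<ge> radic_len r n (\<Sum>k\<le>n. c k * r^k) \<and>
    ((\<Sum>k\<le>n. c k) = radic_len r n (\<Sum>k\<le>n. c k * r^k) \<longrightarrow>
      (\<forall>k\<le>n. c k = radic_digit r n (\<Sum>k\<le>n. c k * r^k) k))"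
  using r
proof (induction n arbitrary: c)
  case 0
  then show ?case by (simp add: radic_len_def radic_digit_def)
next
  case (Suc n)
  define J where "J = (\<Sum>k\<le>Suc n. c k * r^k)"
  define c' where "c' = (\<lambda>k. if k = 0 then c 1 + c 0 div r else c (Suc k))"
  have J1: "J = c 0 + r * (\<Sum>k\<le>n. c (Suc k) * r^k)"
    unfolding J_def by (simp add: sum.atMost_Suc_shift sum_distrib_left mult.assoc mult.commute
        del: sum.atMost_Suc) (simp add: ac_simps)
  have sc': "(\<Sum>k\<le>n. c' k * r^k) = c 0 div r + (\<Sum>k\<le>n. c (Suc k) * r^k)"
    unfolding c'_def
    by (cases n) (simp_all add: sum.atMost_Suc_shift algebra_simps del: sum.atMost_Suc)
  have Jdiv: "J div r = (\<Sum>k\<le>n. c' k * r^k)" and Jmod: "J mod r = c 0 mod r"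
    using Suc.prems unfolding J1 sc' by simp_all
  have sumc': "(\<Sum>k\<le>n. c' k) = c 0 div r + (\<Sum>k\<le>n. c (Suc k))"
    unfolding c'_def
    by (cases n) (simp_all add: sum.atMost_Suc_shift algebra_simps del: sum.atMost_Suc)
  have sumc: "(\<Sum>k\<le>Suc n. c k) = c 0 + (\<Sum>k\<le>n. c (Suc k))"
    by (simp add: sum.atMost_Suc_shift del: sum.atMost_Suc)
  have IH: "(\<Sum>k\<le>n. c' k) \<ge> radic_len r n (J div r) \<and>
    ((\<Sum>k\<le>n. c' k) = radic_len r n (J div r) \<longrightarrow>
      (\<forall>k\<le>n. c' k = radic_digit r n (J div r) k))"
    using Suc.IH[of c'] Suc.prems unfolding Jdiv by blast
  have lenJ: "radic_len r (Suc n) J = c 0 mod r + radic_len r n (J div r)"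
    using len_Suc Jmod by simp
  have key: "c 0 - c 0 div r \<ge> c 0 mod r" and key2: "c 0 - c 0 div r = c 0 mod r \<Longrightarrow> c 0 div r = 0"
  proof -
    have e: "c 0 = r * (c 0 div r) + c 0 mod r" by simp
    have "r * (c 0 div r) \<ge> 2 * (c 0 div r)" using Suc.prems by simp
    then show "c 0 - c 0 div r \<ge> c 0 mod r" using e by linarith
    assume "c 0 - c 0 div r = c 0 mod r"
    with e \<open>r * (c 0 div r) \<ge> 2 * (c 0 div r)\<close> show "c 0 div r = 0" by linarith
  qed
  have ge: "(\<Sum>k\<le>Suc n. c k) \<ge> radic_len r (Suc n) J"
    using IH key sumc sumc' lenJ div_le_dividend[of "c 0" r] by linarith
  moreover have "(\<Sum>k\<le>Suc n. c k) = radic_len r (Suc n) J \<longrightarrow>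
      (\<forall>k\<le>Suc n. c k = radic_digit r (Suc n) J k)"
  proof
    assume eq: "(\<Sum>k\<le>Suc n. c k) = radic_len r (Suc n) J"
    have q0: "c 0 div r = 0"
      using IH key key2 sumc sumc' lenJ eq div_le_dividend[of "c 0" r] by linarith
    have eq2: "(\<Sum>k\<le>n. c' k) = radic_len r n (J div r)"
      using IH key sumc sumc' lenJ eq q0 by linarith
    have dig: "\<forall>k\<le>n. c' k = radic_digit r n (J div r) k" using IH eq2 by blast
    show "\<forall>k\<le>Suc n. c k = radic_digit r (Suc n) J k"
    proof (intro allI impI)
      fix k assume k: "k \<le> Suc n"
      show "c k = radic_digit r (Suc n) J k"
      proof (cases k)
        case 0
        have e0: "c 0 = r * (c 0 div r) + c 0 mod r" by simp
        have "c 0 = c 0 mod r" using e0 q0 by simp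
        then show ?thesis using 0 Jmod digit_Suc0[of r n J] by simp
      next
        case (Suc m)
        have "c' m = c k" using q0 Suc unfolding c'_def by auto
        then show ?thesis using dig Suc k digit_SucSuc by auto
      qed
    qed
  qed
  ultimately show ?case unfolding J_def by blast
qed

lemma len_upper:
  assumes "r \<ge> 1"
  shows "radic_len r n i \<le> n * (r - 1) + i div r ^ n"
proof -
  have "radic_len r n i = (\<Sum>k<n. radic_digit r n i k) + radic_digit r n i n"
    unfolding radic_len_def by (simp add: lessThan_Suc_atMost[symmetric])
  also have "(\<Sum>k<n. radic_digit r n i k) \<le> (\<Sum>k<n. r - 1)"
  proof (rule sum_mono)
    fix k assume "k \<in> {..<n}"
    have "0 < r" using assms by simp
    then have "i div r ^ k mod r < r" by simp
    then show "radic_digit r n i k \<le> r - 1" using \<open>k \<in> {..<n}\<close> by (simp add: radic_digit_def)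
  qed
  finally show ?thesis by (simp add: radic_digit_def)
qed

lemma len_lower: "radic_len r n J \<ge> J div r ^ n"
proof -
  have "radic_digit r n J n \<le> radic_len r n J"
    unfolding radic_len_def by (rule member_le_sum) auto
  then show ?thesis by (simp add: radic_digit_def)
qed

theorem lemma7p4:
  fixes a d r h n :: nat
  assumes "a > 0" "d > 0" "h > 0" "n > 0" "r \<ge> 2"
    and "gcd a d = 1" "gcd a r = 1"
    and "d > h * n * (r - 1)"
    and "minimal_gens (gen a h r d) {0..n+1}"
    and "1 \<le> i" "i \<le> a - 1"
  shows "\<forall>c :: nat \<Rightarrow> nat.
           (\<Sum>k\<le>n. c (k+1) * gen a h r d (k+1)) = radic_len r n i * h * a + i * d
           \<longleftrightarrow> (\<forall>k\<le>n. c (k+1) = radic_digit r n i k)"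
proof
  fix c :: "nat \<Rightarrow> nat"
  define c' where "c' = (\<lambda>k. c (k+1))"
  define C where "C = (\<Sum>k\<le>n. c' k)"
  define J where "J = (\<Sum>k\<le>n. c' k * r^k)"
  define L where "L = radic_len r n i"
  have S: "(\<Sum>k\<le>n. c (k+1) * gen a h r d (k+1)) = C * h * a + J * d"
    unfolding C_def J_def c'_def gen_def
    by (simp add: algebra_simps sum.distrib sum_distrib_left sum_distrib_right)
  show "(\<Sum>k\<le>n. c (k+1) * gen a h r d (k+1)) = radic_len r n i * h * a + i * d
           \<longleftrightarrow> (\<forall>k\<le>n. c (k+1) = radic_digit r n i k)"
  proof
    assume "\<forall>k\<le>n. c (k+1) = radic_digit r n i k"
    then have "C = L" "J = i" unfolding C_def L_def J_def c'_def radic_len_def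
      using expand[of r n i] by (auto intro!: sum.cong)
    then show "(\<Sum>k\<le>n. c (k+1) * gen a h r d (k+1)) = radic_len r n i * h * a + i * d"
      using S L_def by simp
  next
    assume "(\<Sum>k\<le>n. c (k+1) * gen a h r d (k+1)) = radic_len r n i * h * a + i * d"
    then have E: "C * h * a + J * d = L * h * a + i * d" using S L_def by simp
    have cop: "coprime a d" using assms(6) by (simp add: coprime_iff_gcd_eq_1)
    have ml: "C \<ge> radic_len r n J \<and> (C = radic_len r n J \<longrightarrow> (\<forall>k\<le>n. c' k = radic_digit r n J k))"
      using minlem[OF assms(5), of n c'] unfolding C_def J_def by blast
    have Ji: "J = i"
    proof (rule ccontr)
      assume ne: "J \<noteq> i"
      show False
      proof (cases "J < i")
        case True
        then have "C > L"
        proof -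
          have "J * d < i * d" using True assms(2) by simp
          then have "L*h*a < C*h*a" using E by linarith
          then have "L*h < C*h" by (simp only: mult_less_cancel2)
          then show ?thesis by (simp only: mult_less_cancel2)
        qed
        then have "(C - L) * h * a = (i - J) * d" using E True
          by (simp add: diff_mult_distrib) 
        then have "a dvd (i - J) * d" by (metis dvd_triv_right)
        then have "a dvd (i - J)" using cop by (simp add: coprime_dvd_mult_left_iff)
        moreover have "0 < i - J" "i - J < a" using True assms(11) assms(1) by auto
        ultimately show False by (simp add: nat_dvd_not_less)
      next
        case False
        then have gt: "J > i" using ne by simp
        then have "C < L"
        proof -
          have "J * d > i * d" using gt assms(2) by simp
          then have "C*h*a < L*h*a" using E by linarith
          then have "C*h < L*h" by (simp only: mult_less_cancel2)
          then show ?thesis by (simp only: mult_less_cancel2)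
        qed
        then have D: "(L - C) * h * a = (J - i) * d" using E gt
          by (simp add: diff_mult_distrib)
        then have "a dvd (J - i) * d" by (metis dvd_triv_right)
        then have "a dvd (J - i)" using cop by (simp add: coprime_dvd_mult_left_iff)
        then have "J - i \<ge> a" using gt by (simp add: dvd_imp_le)
        then have "(L - C) * h * a \<ge> a * d" using D by (metis mult.commute mult_le_mono1)
        then have "(L - C) * h \<ge> d" using assms(1) by (simp add: mult.commute)
        then have "(L - C) * h > h * (n * (r - 1))" using assms(8) unfolding mult.assoc by linarith
        then have lc: "L - C > n * (r - 1)" using assms(3) mult_less_cancel1[of h "n*(r-1)" "L-C"] by (simp add: mult.commute)
        have "L \<le> n * (r - 1) + i div r ^ n" unfolding L_def using len_upper assms(5) by simp
        also have "i div r ^ n \<le> J div r ^ n" using gt by (simp add: div_le_mono)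
        also have "J div r ^ n \<le> C" using len_lower[of J r n] ml by linarith
        finally show False using lc by linarith
      qed
    qed
    then have "C * h * a = L * h * a" using E by simp
    then have "C = L" using assms(1,3) by simp
    then have "C = radic_len r n J" using Ji L_def by simp
    then have "\<forall>k\<le>n. c' k = radic_digit r n J k" using ml by blast
    then show "\<forall>k\<le>n. c (k+1) = radic_digit r n i k" using Ji c'_def by simp
  qed
qed

end
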